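(* Let $p\in\mathcal{X}$. Then there exists a pathless polynomial $q\in\mathcal{X}$ such that $p\equiv q \pmod{\mathcal{J}}$.
   Context: Let $\mathbf{k}$ be a commutative ring, let $\beta,\alpha\in\mathbf{k}$, and let $n$ be a positive integer; write $[m]=\{1,2,\dots,m\}$. Let $\mathcal{X}=\mathbf{k}[x_{i,j}\mid 1\le i<j\le n]$ be the polynomial ring over $\mathbf{k}$ in the $n(n-1)/2$ indeterminates $x_{i,j}$, and let $\mathfrak{M}$ be the set of monomials (without coefficients) in these indeterminates. Let $\mathcal{J}$ be the ideal of $\mathcal{X}$ generated by all elements $x_{i,j}x_{j,k}-x_{i,k}(x_{i,j}+x_{j,k}+\beta)-\alpha$ for $1\le i<j<k\le n$. A monomial $\mathfrak{m}\in\mathfrak{M}$ is pathless if there is no triple $(i,j,k)$ with $1\le i<j<k\le n$ and $x_{i,j}x_{j,k}\mid\mathfrak{m}$. A polynomial in $\mathcal{X}$ is pathless if it is a $\mathbf{k}$-linear combination of pathless monomials. *)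

theory Defs
  imports "HOL-Library.Poly_Mapping"
begin

type_synonym monom = "(nat \<times> nat) \<Rightarrow>\<^sub>0 nat"
type_synonym 'k mpoly = "monom \<Rightarrow>\<^sub>0 'k"

definition var :: "nat \<Rightarrow> nat \<Rightarrow> 'k::comm_ring_1 mpoly" where
  "var i j = Poly_Mapping.single (Poly_Mapping.single (i, j) 1) 1"

definition var_idx :: "nat \<Rightarrow> (nat \<times> nat) set" where
  "var_idx n = {(i, j). 1 \<le> i \<and> i < j \<and> j \<le> n}"

definition polyX :: "nat \<Rightarrow> 'k::comm_ring_1 mpoly set" where
  "polyX n = {p. \<forall>m \<in> Poly_Mapping.keys (p::'k mpoly). Poly_Mapping.keys (m::monom) \<subseteq> var_idx n}"

definition ideal_gen :: "'a::comm_ring_1 set \<Rightarrow> 'a set \<Rightarrow> 'a set" where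
  "ideal_gen R G = {\<Sum>g\<in>S. c g * g | S c. finite S \<and> S \<subseteq> G \<and> (\<forall>g\<in>S. c g \<in> R)}"

definition J_gens :: "'k::comm_ring_1 \<Rightarrow> 'k \<Rightarrow> nat \<Rightarrow> 'k mpoly set" where
  "J_gens \<beta> \<alpha> n = {var i j * var j k - var i k * (var i j + var j k + Poly_Mapping.single 0 \<beta>)
                        - Poly_Mapping.single 0 \<alpha> | i j k. 1 \<le> i \<and> i < j \<and> j < k \<and> k \<le> n}"

definition idealJ :: "'k::comm_ring_1 \<Rightarrow> 'k \<Rightarrow> nat \<Rightarrow> 'k mpoly set" where
  "idealJ \<beta> \<alpha> n = ideal_gen (polyX n) (J_gens \<beta> \<alpha> n)"

definition pathless_monom :: "nat \<Rightarrow> monom \<Rightarrow> bool" where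
  "pathless_monom n m \<longleftrightarrow> Poly_Mapping.keys m \<subseteq> var_idx n \<and>
     \<not> (\<exists>i j k. 1 \<le> i \<and> i < j \<and> j < k \<and> k \<le> n \<and>
              Poly_Mapping.lookup m (i, j) \<ge> 1 \<and> Poly_Mapping.lookup m (j, k) \<ge> 1)"

definition pathless :: "nat \<Rightarrow> 'k::comm_ring_1 mpoly \<Rightarrow> bool" where
  "pathless n q \<longleftrightarrow> (\<forall>m \<in> Poly_Mapping.keys q. pathless_monom n m)"

end

theory Submission
  imports Defs
begin

lemma keys_add_sub: "Poly_Mapping.keys (a + b) \<subseteq> Poly_Mapping.keys a \<union> Poly_Mapping.keys b"
  by (rule keys_add)

lemma polyX_add: assumes "a \<in> polyX n" "b \<in> polyX n" shows "a + b \<in> polyX n"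
proof -
  have "Poly_Mapping.keys (a + b) \<subseteq> Poly_Mapping.keys a \<union> Poly_Mapping.keys b" by (rule keys_add)
  then show ?thesis using assms unfolding polyX_def by blast
qed

lemma polyX_zero: "0 \<in> polyX n"
  unfolding polyX_def by simp

lemma polyX_single: "Poly_Mapping.keys m \<subseteq> var_idx n \<Longrightarrow> Poly_Mapping.single m c \<in> polyX n"
  unfolding polyX_def by simp

lemma polyX_mult:
  assumes "a \<in> polyX n" "b \<in> polyX n" shows "a * b \<in> polyX n"
proof -
  { fix m assume "m \<in> Poly_Mapping.keys (a * b)"
    then obtain u v where "m = u + v" "u \<in> Poly_Mapping.keys a" "v \<in> Poly_Mapping.keys b" using keys_mult by blast
    moreover have "Poly_Mapping.keys (u + v) \<subseteq> Poly_Mapping.keys u \<union> Poly_Mapping.keys v" by (rule keys_add)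
    moreover have "Poly_Mapping.keys u \<subseteq> var_idx n" "Poly_Mapping.keys v \<subseteq> var_idx n"
      using assms \<open>u \<in> _\<close> \<open>v \<in> _\<close> unfolding polyX_def by auto
    ultimately have "Poly_Mapping.keys m \<subseteq> var_idx n" by blast }
  then show ?thesis unfolding polyX_def by blast
qed

lemma polyX_uminus: "a \<in> polyX n \<Longrightarrow> - a \<in> polyX n"
  unfolding polyX_def by simp

lemma ideal_zero: "0 \<in> ideal_gen R G"
  unfolding ideal_gen_def by (rule CollectI, rule exI[of _ "{}"], auto)

lemma ideal_gen_mem: "g \<in> G \<Longrightarrow> 1 \<in> R \<Longrightarrow> g \<in> ideal_gen R G"
  unfolding ideal_gen_def by (rule CollectI, rule exI[of _ "{g}"], rule exI[of _ "\<lambda>_. 1"], auto)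

lemma ideal_add:
  assumes a: "a \<in> ideal_gen R G" and b: "b \<in> ideal_gen R G"
    and R0: "0 \<in> R" and Radd: "\<And>x y. x \<in> R \<Longrightarrow> y \<in> R \<Longrightarrow> x + y \<in> R"
  shows "a + b \<in> ideal_gen R G"
proof -
  obtain S1 c1 where 1: "a = (\<Sum>g\<in>S1. c1 g * g)" "finite S1" "S1 \<subseteq> G" "\<forall>g\<in>S1. c1 g \<in> R"
    using a unfolding ideal_gen_def by blast
  obtain S2 c2 where 2: "b = (\<Sum>g\<in>S2. c2 g * g)" "finite S2" "S2 \<subseteq> G" "\<forall>g\<in>S2. c2 g \<in> R"
    using b unfolding ideal_gen_def by blast
  define S where "S = S1 \<union> S2"
  define c where "c g = (if g \<in> S1 then c1 g else 0) + (if g \<in> S2 then c2 g else 0)" for g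
  have fS: "finite S" using 1 2 S_def by simp
  have cg: "c g * g = (if g \<in> S1 then c1 g * g else 0) + (if g \<in> S2 then c2 g * g else 0)" for g
    unfolding c_def by (simp add: distrib_right)
  have s1: "(\<Sum>g\<in>S. (if g \<in> S1 then c1 g * g else 0)) = (\<Sum>g\<in>S1. c1 g * g)"
  proof -
    have "(\<Sum>g\<in>S. (if g \<in> S1 then c1 g * g else 0)) = (\<Sum>g\<in>S \<inter> S1. c1 g * g)"
      by (rule sum.inter_restrict[OF fS, symmetric])
    moreover have "S \<inter> S1 = S1" unfolding S_def by blast
    ultimately show ?thesis by simp
  qed
  have s2: "(\<Sum>g\<in>S. (if g \<in> S2 then c2 g * g else 0)) = (\<Sum>g\<in>S2. c2 g * g)"
  proof -
    have "(\<Sum>g\<in>S. (if g \<in> S2 then c2 g * g else 0)) = (\<Sum>g\<in>S \<inter> S2. c2 g * g)"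
      by (rule sum.inter_restrict[OF fS, symmetric])
    moreover have "S \<inter> S2 = S2" unfolding S_def by blast
    ultimately show ?thesis by simp
  qed
  have calc: "(\<Sum>g\<in>S. c g * g) = (\<Sum>g\<in>S1. c1 g * g) + (\<Sum>g\<in>S2. c2 g * g)"
    unfolding cg sum.distrib s1 s2 ..
  have e: "a + b = (\<Sum>g\<in>S. c g * g)" unfolding calc 1(1) 2(1) by (rule refl)
  have cR: "\<forall>g\<in>S. c g \<in> R"
  proof
    fix g assume "g \<in> S"
    have "(if g \<in> S1 then c1 g else 0) \<in> R" using 1(4) R0 by simp
    moreover have "(if g \<in> S2 then c2 g else 0) \<in> R" using 2(4) R0 by simp
    ultimately show "c g \<in> R" unfolding c_def by (rule Radd)
  qed
  have SG: "S \<subseteq> G" using 1 2 S_def by auto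
  show ?thesis unfolding ideal_gen_def
    by (intro CollectI exI[of _ S] exI[of _ c] conjI e fS SG cR)
qed

lemma ideal_mult:
  assumes a: "a \<in> ideal_gen R G" and r: "r \<in> R"
    and Rmul: "\<And>x y. x \<in> R \<Longrightarrow> y \<in> R \<Longrightarrow> x * y \<in> R"
  shows "r * a \<in> ideal_gen R G"
proof -
  obtain S c where 1: "a = (\<Sum>g\<in>S. c g * g)" "finite S" "S \<subseteq> G" "\<forall>g\<in>S. c g \<in> R"
    using a unfolding ideal_gen_def by blast
  have e: "r * a = (\<Sum>g\<in>S. (r * c g) * g)" unfolding 1(1) by (simp add: sum_distrib_left mult.assoc)
  have cR: "\<forall>g\<in>S. r * c g \<in> R" using 1 r Rmul by auto
  show ?thesis unfolding ideal_gen_def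
    by (intro CollectI exI[of _ S] exI[of _ "\<lambda>g. r * c g"] conjI e 1(2) 1(3) cR)
qed

lemma one_polyX: "1 \<in> polyX n"
  unfolding polyX_def by simp

lemma J_add: "a \<in> idealJ \<beta> \<alpha> n \<Longrightarrow> b \<in> idealJ \<beta> \<alpha> n \<Longrightarrow> a + b \<in> idealJ \<beta> \<alpha> n"
  unfolding idealJ_def by (rule ideal_add[OF _ _ polyX_zero polyX_add])

lemma J_mult: "a \<in> idealJ \<beta> \<alpha> n \<Longrightarrow> r \<in> polyX n \<Longrightarrow> r * a \<in> idealJ \<beta> \<alpha> n"
  unfolding idealJ_def by (rule ideal_mult[OF _ _ polyX_mult])

lemma J_zero: "0 \<in> idealJ \<beta> \<alpha> n"
  unfolding idealJ_def by (rule ideal_zero)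

lemma J_gen: "g \<in> J_gens \<beta> \<alpha> n \<Longrightarrow> g \<in> idealJ \<beta> \<alpha> n"
  unfolding idealJ_def by (rule ideal_gen_mem[OF _ one_polyX])

lemma J_sum: "finite A \<Longrightarrow> (\<And>x. x \<in> A \<Longrightarrow> f x \<in> idealJ \<beta> \<alpha> n) \<Longrightarrow> sum f A \<in> idealJ \<beta> \<alpha> n"
  by (induction A rule: finite_induct) (simp_all add: J_zero J_add)

lemma pathless_add: assumes "pathless n a" "pathless n b" shows "pathless n (a + b)"
proof -
  have "Poly_Mapping.keys (a + b) \<subseteq> Poly_Mapping.keys a \<union> Poly_Mapping.keys b" by (rule keys_add)
  then show ?thesis using assms unfolding pathless_def by blast
qed

lemma pathless_zero: "pathless n 0"
  unfolding pathless_def by simp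

lemma pathless_scal: "pathless n a \<Longrightarrow> pathless n (Poly_Mapping.single 0 c * a)"
proof -
  assume a: "pathless n a"
  have "Poly_Mapping.keys (Poly_Mapping.single 0 c * a) \<subseteq> Poly_Mapping.keys a"
    using keys_mult[of "Poly_Mapping.single 0 c" a] by (auto split: if_splits)
  then show ?thesis using a unfolding pathless_def by blast
qed

lemma pathless_sum: "finite A \<Longrightarrow> (\<And>x. x \<in> A \<Longrightarrow> pathless n (f x)) \<Longrightarrow> pathless n (sum f A)"
  by (induction A rule: finite_induct) (simp_all add: pathless_zero pathless_add)

lemma pathless_polyX: "pathless n q \<Longrightarrow> q \<in> polyX n"
  unfolding pathless_def polyX_def pathless_monom_def by blast

definition cw :: "nat \<Rightarrow> nat \<times> nat \<Rightarrow> nat" where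
  "cw n v = n * n - (snd v - fst v) * (snd v - fst v)"

definition fm :: "nat \<Rightarrow> monom \<Rightarrow> nat" where
  "fm n m = (\<Sum>v\<in>Poly_Mapping.keys m. Poly_Mapping.lookup m v * cw n v)"

lemma fm_add: "fm n (a + b) = fm n a + fm n b"
  unfolding fm_def
  by (rule setsum_keys_plus_distrib) (auto simp: distrib_right)

lemma fm_single: "fm n (Poly_Mapping.single v 1) = cw n v"
  unfolding fm_def by simp


lemma keys_add_single:
  assumes "Poly_Mapping.keys a \<subseteq> V" "v \<in> V"
  shows "Poly_Mapping.keys (a + Poly_Mapping.single v (1::nat)) \<subseteq> V"
proof -
  have "Poly_Mapping.keys (a + Poly_Mapping.single v (1::nat)) \<subseteq> Poly_Mapping.keys a \<union> Poly_Mapping.keys (Poly_Mapping.single v (1::nat))"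
    by (rule keys_add)
  then show ?thesis using assms by auto
qed

lemma sq_lt: "(a::nat) < c \<Longrightarrow> a * a < c * c"
  by (simp add: mult_strict_mono)

lemma cw_facts:
  assumes "1 \<le> i" "i < j" "j < k" "k \<le> n"
  shows "cw n (i, k) < cw n (j, k)" "cw n (i, k) < cw n (i, j)" "0 < cw n (i, j)"
proof -
  have a: "(k - i) * (k - i) < n * n" using assms by (intro sq_lt) simp
  have b: "(j - i) * (j - i) < (k - i) * (k - i)" using assms by (intro sq_lt) simp
  have c: "(k - j) * (k - j) < (k - i) * (k - i)" using assms by (intro sq_lt) simp
  show "cw n (i, k) < cw n (j, k)" unfolding cw_def fst_conv snd_conv using a c by linarith
  show "cw n (i, k) < cw n (i, j)" unfolding cw_def fst_conv snd_conv using a b by linarith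
  show "0 < cw n (i, j)" unfolding cw_def fst_conv snd_conv using a b by linarith
qed

lemma single_polyX0: "Poly_Mapping.single 0 c \<in> polyX n"
  by (rule polyX_single) simp

lemma mono_reduce:
  fixes \<beta> \<alpha> :: "'k::comm_ring_1"
  shows "Poly_Mapping.keys m \<subseteq> var_idx n \<Longrightarrow>
    \<exists>q\<in>polyX n. pathless n q \<and> Poly_Mapping.single m (1::'k) - q \<in> idealJ \<beta> \<alpha> n"
proof (induction m rule: measure_induct_rule[of "fm n"])
  case (less m)
  show ?case
  proof (cases "pathless_monom n m")
    case True
    then have pl: "pathless n (Poly_Mapping.single m (1::'k))" unfolding pathless_def by simp
    show ?thesis
      by (rule bexI[of _ "Poly_Mapping.single m 1"]) (simp_all add: pl J_zero pathless_polyX)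
  next
    case False
    then obtain i j k where ijk: "1 \<le> i" "i < j" "j < k" "k \<le> n"
      "Poly_Mapping.lookup m (i, j) \<ge> 1" "Poly_Mapping.lookup m (j, k) \<ge> 1"
      using less.prems unfolding pathless_monom_def by blast
    define eij where "eij = Poly_Mapping.single (i, j) (1::nat)"
    define ejk where "ejk = Poly_Mapping.single (j, k) (1::nat)"
    define eik where "eik = Poly_Mapping.single (i, k) (1::nat)"
    define m' where "m' = m - eij - ejk"
    have neq: "(i, j) \<noteq> (j, k)" using ijk by auto
    have mdec: "m = m' + eij + ejk"
    proof (rule poly_mapping_eqI)
      fix x
      show "Poly_Mapping.lookup m x = Poly_Mapping.lookup (m' + eij + ejk) x"
        using ijk neq by (auto simp: m'_def eij_def ejk_def lookup_add lookup_minus lookup_single when_def)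
    qed
    have "Poly_Mapping.keys m' \<subseteq> Poly_Mapping.keys m"
      unfolding m'_def by (auto simp: in_keys_iff lookup_minus)
    then have km': "Poly_Mapping.keys m' \<subseteq> var_idx n" using less.prems by blast
    have ik: "(i, k) \<in> var_idx n" and ij: "(i, j) \<in> var_idx n" and jk: "(j, k) \<in> var_idx n"
      using ijk by (auto simp: var_idx_def)
    define A where "A = m' + eik + eij"
    define B where "B = m' + eik + ejk"
    define C where "C = m' + eik"
    have kA: "Poly_Mapping.keys A \<subseteq> var_idx n" unfolding A_def eik_def eij_def
      by (intro keys_add_single km' ik ij)
    have kB: "Poly_Mapping.keys B \<subseteq> var_idx n" unfolding B_def eik_def ejk_def
      by (intro keys_add_single km' ik jk)
    have kC: "Poly_Mapping.keys C \<subseteq> var_idx n" unfolding C_def eik_def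
      by (intro keys_add_single km' ik)
    have cw: "cw n (i, k) < cw n (j, k)" "cw n (i, k) < cw n (i, j)" "0 < cw n (i, j)"
      using cw_facts[OF ijk(1-4)] by auto
    have fmm: "fm n m = fm n m' + cw n (i, j) + cw n (j, k)"
      unfolding mdec fm_add eij_def ejk_def fm_single ..
    have fA: "fm n A < fm n m" unfolding fmm A_def fm_add eik_def eij_def fm_single using cw by simp
    have fB: "fm n B < fm n m" unfolding fmm B_def fm_add eik_def ejk_def fm_single using cw by simp
    have fC: "fm n C < fm n m" unfolding fmm C_def fm_add eik_def fm_single using cw by simp
    have fD: "fm n m' < fm n m" unfolding fmm using cw by simp
    obtain qA where qA: "qA \<in> polyX n" "pathless n qA" "Poly_Mapping.single A (1::'k) - qA \<in> idealJ \<beta> \<alpha> n"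
      using less.IH[OF fA kA] by blast
    obtain qB where qB: "qB \<in> polyX n" "pathless n qB" "Poly_Mapping.single B (1::'k) - qB \<in> idealJ \<beta> \<alpha> n"
      using less.IH[OF fB kB] by blast
    obtain qC where qC: "qC \<in> polyX n" "pathless n qC" "Poly_Mapping.single C (1::'k) - qC \<in> idealJ \<beta> \<alpha> n"
      using less.IH[OF fC kC] by blast
    obtain qD where qD: "qD \<in> polyX n" "pathless n qD" "Poly_Mapping.single m' (1::'k) - qD \<in> idealJ \<beta> \<alpha> n"
      using less.IH[OF fD km'] by blast
    define g :: "'k mpoly" where "g = var i j * var j k - var i k * (var i j + var j k + Poly_Mapping.single 0 \<beta>)
                        - Poly_Mapping.single 0 \<alpha>"
    have gJ: "g \<in> J_gens \<beta> \<alpha> n" unfolding g_def J_gens_def using ijk(1-4) by blast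
    define s :: "'k mpoly" where "s = Poly_Mapping.single m' 1"
    have p1: "s * (var i j * var j k) = Poly_Mapping.single m 1"
      unfolding s_def var_def by (simp add: mult_single mdec eij_def ejk_def add.assoc)
    have p2: "s * (var i k * var i j) = Poly_Mapping.single A 1"
      unfolding s_def var_def by (simp add: mult_single A_def eik_def eij_def add.assoc)
    have p3: "s * (var i k * var j k) = Poly_Mapping.single B 1"
      unfolding s_def var_def by (simp add: mult_single B_def eik_def ejk_def add.assoc)
    have p4: "s * (var i k * Poly_Mapping.single 0 \<beta>) = Poly_Mapping.single 0 \<beta> * Poly_Mapping.single C 1"
      unfolding s_def var_def by (simp add: mult_single C_def eik_def add.commute)
    have p5: "s * Poly_Mapping.single 0 \<alpha> = Poly_Mapping.single 0 \<alpha> * Poly_Mapping.single m' 1"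
      unfolding s_def by (simp add: mult_single)
    have sg: "s * g = Poly_Mapping.single m 1 - Poly_Mapping.single A 1 - Poly_Mapping.single B 1
        - Poly_Mapping.single 0 \<beta> * Poly_Mapping.single C 1 - Poly_Mapping.single 0 \<alpha> * Poly_Mapping.single m' 1"
    proof -
      have "s * g = s * (var i j * var j k) - s * (var i k * var i j) - s * (var i k * var j k)
          - s * (var i k * Poly_Mapping.single 0 \<beta>) - s * Poly_Mapping.single 0 \<alpha>"
        unfolding g_def by (simp add: algebra_simps)
      then show ?thesis unfolding p1 p2 p3 p4 p5 .
    qed
    define q where "q = qA + qB + Poly_Mapping.single 0 \<beta> * qC + Poly_Mapping.single 0 \<alpha> * qD"
    have qe: "Poly_Mapping.single m 1 - q = s * g + (Poly_Mapping.single A 1 - qA) + (Poly_Mapping.single B 1 - qB)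
       + Poly_Mapping.single 0 \<beta> * (Poly_Mapping.single C 1 - qC) + Poly_Mapping.single 0 \<alpha> * (Poly_Mapping.single m' 1 - qD)"
      unfolding sg q_def by (simp add: algebra_simps)
    have sX: "s \<in> polyX n" unfolding s_def by (rule polyX_single[OF km'])
    have "Poly_Mapping.single m 1 - q \<in> idealJ \<beta> \<alpha> n"
      unfolding qe
      by (intro J_add J_mult[OF J_gen[OF gJ] sX] qA(3) qB(3) J_mult[OF qC(3) single_polyX0] J_mult[OF qD(3) single_polyX0])
    moreover have "pathless n q" unfolding q_def
      by (intro pathless_add pathless_scal qA(2) qB(2) qC(2) qD(2))
    ultimately show ?thesis using pathless_polyX by blast
  qed
qed

lemma poly_expand: "p = (\<Sum>m\<in>Poly_Mapping.keys p. Poly_Mapping.single m (Poly_Mapping.lookup p m))"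
proof (rule poly_mapping_eqI)
  fix x
  show "Poly_Mapping.lookup p x = Poly_Mapping.lookup (\<Sum>m\<in>Poly_Mapping.keys p. Poly_Mapping.single m (Poly_Mapping.lookup p m)) x"
    by (simp add: lookup_sum lookup_single when_def in_keys_iff)
qed

theorem proposition2p5:
  fixes \<beta> \<alpha> :: "'k::comm_ring_1" and n :: nat and p :: "'k mpoly"
  assumes "n \<ge> 1" and "p \<in> polyX n"
  shows "\<exists>q \<in> polyX n. pathless n q \<and> p - q \<in> idealJ \<beta> \<alpha> n"
proof -
  have "\<forall>m\<in>Poly_Mapping.keys p. \<exists>q. q \<in> polyX n \<and> pathless n q \<and> Poly_Mapping.single m (1::'k) - q \<in> idealJ \<beta> \<alpha> n"
    using assms(2) mono_reduce[of _ n \<beta> \<alpha>] unfolding polyX_def by blast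
  from bchoice[OF this] obtain Q where Q: "\<forall>m\<in>Poly_Mapping.keys p. Q m \<in> polyX n \<and> pathless n (Q m)
      \<and> Poly_Mapping.single m (1::'k) - Q m \<in> idealJ \<beta> \<alpha> n" by blast
  define q where "q = (\<Sum>m\<in>Poly_Mapping.keys p. Poly_Mapping.single 0 (Poly_Mapping.lookup p m) * Q m)"
  have pe: "p = (\<Sum>m\<in>Poly_Mapping.keys p. Poly_Mapping.single 0 (Poly_Mapping.lookup p m) * Poly_Mapping.single m 1)"
    by (subst poly_expand) (simp add: mult_single)
  have "p - q = (\<Sum>m\<in>Poly_Mapping.keys p. Poly_Mapping.single 0 (Poly_Mapping.lookup p m) * (Poly_Mapping.single m 1 - Q m))"
    unfolding q_def by (subst pe) (simp add: sum_subtractf right_diff_distrib)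
  moreover have "\<dots> \<in> idealJ \<beta> \<alpha> n"
    by (rule J_sum) (use Q in \<open>auto intro: J_mult single_polyX0\<close>)
  moreover have "pathless n q" unfolding q_def
    by (rule pathless_sum) (use Q in \<open>auto intro: pathless_scal\<close>)
  ultimately show ?thesis
    by (intro bexI[of _ q]) (simp_all add: pathless_polyX)
qed

end
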